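(* Let $p>1$ and let $(\mathcal{X},\mathcal{F},\{\mathcal{F}_n\}_{n\ge0},\mu)$ be a discrete-time filtered probability space. For all $\mathbf{f}\ge0$ and $F\ge\mathbf{f}^p$, $$\widetilde{\mathcal{B}}^{\mathcal{F}}_\mu(F,\mathbf{f})\le\mathcal{B}^{\mathcal{F}}_\mu(F,\mathbf{f},1;1).$$ Moreover, if $\{\mathcal{F}_n\}_{n\ge0}$ is an infinitely refining filtration, then $\widetilde{\mathcal{B}}^{\mathcal{F}}_\mu(F,\mathbf{f})=\mathcal{B}^{\mathcal{F}}_\mu(F,\mathbf{f},1;1)$ (which by the coincidence theorem also equals the dyadic Bellman function $\mathcal{B}(F,\mathbf{f},1;1)$).
   Context: $f_n=\mathbb{E}^\mu[f\mid\mathcal{F}_n]$, $f^*=\sup_{n\ge0}|f_n|$. $\widetilde{\mathcal{B}}^{\mathcal{F}}_\mu(F,\mathbf{f})=\sup\{\mathbb{E}^\mu[|f^*|^p]: f\ge0,\ \mathbb{E}^\mu[f^p]=F,\ \mathbb{E}^\mu[f]=\mathbf{f}\}$. $\mathcal{B}^{\mathcal{F}}_\mu(F,\mathbf{f},M;C)$ is the supremum of $\mathbb{E}^\mu[\sum_{n\ge0}\alpha_nf_n^p]$ over all non-negative $f$ and all sequences of non-negative random variables $\{\alpha_n\}$ with $\alpha_n$ $\mathcal{F}_n$-measurable and $\mathbb{E}^\mu[\sum_{k\ge n}\alpha_k\mid\mathcal{F}_n]\le C$ for all $n$, such that $\mathbb{E}^\mu[f^p]=F$, $\mathbb{E}^\mu[f]=\mathbf{f}$,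 $\mathbb{E}^\mu[\sum_n\alpha_n]=M$. The dyadic Bellman function $\mathcal{B}(F,\mathbf{f},M;C)$ is the supremum of $|I|^{-1}\sum_{J\in\mathcal{D},J\subseteq I}\alpha_J\langle f\rangle_J^p$ over non-negative $f$ on a dyadic interval $I$ and non-negative $\{\alpha_J\}$ with $\langle f^p\rangle_I=F$, $\langle f\rangle_I=\mathbf{f}$, $|I|^{-1}\sum_{J\subseteq I}\alpha_J=M$, $\sum_{J'\subseteq J}\alpha_{J'}\le C|J|$ for all dyadic $J\subseteq I$. The filtration is infinitely refining if for every $\varepsilon>0$, $n\ge0$, $E\in\mathcal{F}_n$ there exist $k>n$ and real-valued $\mathcal{F}_k$-measurable $h$ with $|h\mathbf{1}_E|=\mathbf{1}_E$ and $\int_E|\mathbb{E}^\mu[h\mid\mathcal{F}_n]|\,d\mu\le\varepsilon$. *)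

theory Defs
  imports "HOL-Probability.Probability"
begin

definition discrete_filtration :: "'a measure \<Rightarrow> (nat \<Rightarrow> 'a measure) \<Rightarrow> bool" where
  "discrete_filtration M F \<longleftrightarrow>
     (\<forall>n. subalgebra M (F n)) \<and> (\<forall>n. sets (F n) \<subseteq> sets (F (Suc n)))"

text \<open>Since t -> t^p is increasing and continuous, (sup_n |f_n|)^p = sup_n |f_n|^p.\<close>
definition max_bellman ::
    "'a measure \<Rightarrow> (nat \<Rightarrow> 'a measure) \<Rightarrow> real \<Rightarrow> real \<Rightarrow> real \<Rightarrow> ennreal" where
  "max_bellman M F p FF ff =
     Sup {(\<integral>\<^sup>+ x. (SUP n. ennreal (\<bar>real_cond_exp M (F n) f x\<bar> powr p)) \<partial>M) | f.
            f \<in> borel_measurable M \<and> (\<forall>x\<in>space M. 0 \<le> f x) \<and>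
            (\<integral>\<^sup>+ x. ennreal (f x powr p) \<partial>M) = ennreal FF \<and>
            (\<integral>\<^sup>+ x. ennreal (f x) \<partial>M) = ennreal ff}"

definition carleson_bellman ::
    "'a measure \<Rightarrow> (nat \<Rightarrow> 'a measure) \<Rightarrow> real \<Rightarrow> real \<Rightarrow> real \<Rightarrow> real \<Rightarrow> real \<Rightarrow> ennreal" where
  "carleson_bellman M F p FF ff MM C =
     Sup {(\<integral>\<^sup>+ x. (\<Sum>n. ennreal (\<alpha> n x * \<bar>real_cond_exp M (F n) f x\<bar> powr p)) \<partial>M) | f \<alpha>.
            f \<in> borel_measurable M \<and> (\<forall>x\<in>space M. 0 \<le> f x) \<and>
            (\<forall>n. \<alpha> n \<in> borel_measurable (F n)) \<and> (\<forall>n. \<forall>x\<in>space M. 0 \<le> \<alpha> n x) \<and>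
            (\<forall>n. AE x in M. nn_cond_exp M (F n) (\<lambda>y. \<Sum>k. ennreal (\<alpha> (n + k) y)) x \<le> ennreal C) \<and>
            (\<integral>\<^sup>+ x. ennreal (f x powr p) \<partial>M) = ennreal FF \<and>
            (\<integral>\<^sup>+ x. ennreal (f x) \<partial>M) = ennreal ff \<and>
            (\<integral>\<^sup>+ x. (\<Sum>n. ennreal (\<alpha> n x)) \<partial>M) = ennreal MM}"

definition infinitely_refining :: "'a measure \<Rightarrow> (nat \<Rightarrow> 'a measure) \<Rightarrow> bool" where
  "infinitely_refining M F \<longleftrightarrow>
     (\<forall>\<epsilon>>0. \<forall>n. \<forall>E\<in>sets (F n). \<exists>k>n. \<exists>h::'a \<Rightarrow> real.
        h \<in> borel_measurable (F k) \<and> integrable M h \<and>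
        (\<forall>x\<in>space M. \<bar>h x * indicator E x\<bar> = indicator E x) \<and>
        (\<integral>x\<in>E. \<bar>real_cond_exp M (F n) h x\<bar> \<partial>M) \<le> \<epsilon>)"

end

theory Submission
  imports Defs
begin

fun runmax :: "(nat \<Rightarrow> real) \<Rightarrow> nat \<Rightarrow> real" where
  "runmax g 0 = g 0"
| "runmax g (Suc n) = max (runmax g n) (g (Suc n))"

lemma runmax_ge: "k \<le> n \<Longrightarrow> g k \<le> runmax g n"
  by (induction n) (auto simp: le_Suc_eq intro: order_trans)

lemma runmax_ex: "\<exists>k\<le>n. runmax g n = g k"
  by (induction n) (auto simp: max_def intro: le_SucI)

lemma runmax_mono: "m \<le> n \<Longrightarrow> runmax g m \<le> runmax g n"
  by (induction n) (auto simp: le_Suc_eq intro: order_trans)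

lemma SUP_runmax: "(SUP n. ennreal (runmax g n)) = (SUP n. ennreal (g n))"
proof (rule antisym)
  show "(SUP n. ennreal (runmax g n)) \<le> (SUP n. ennreal (g n))"
  proof (rule SUP_least)
    fix n obtain k where "runmax g n = g k" using runmax_ex by blast
    then show "ennreal (runmax g n) \<le> (SUP n. ennreal (g n))" by (metis SUP_upper UNIV_I)
  qed
  show "(SUP n. ennreal (g n)) \<le> (SUP n. ennreal (runmax g n))"
    by (rule SUP_mono) (auto intro!: ennreal_leI runmax_ge)
qed

lemma runmax_measurable:
  assumes "\<And>k. k \<le> n \<Longrightarrow> G k \<in> borel_measurable N"
  shows "(\<lambda>x. runmax (\<lambda>k. G k x) n) \<in> borel_measurable N"
  using assms by (induction n) (auto intro!: borel_measurable_max)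

lemma swap_tri:
  fixes a b :: "nat \<Rightarrow> 'b::comm_semiring_0"
  shows "(\<Sum>n<N. a n * (\<Sum>m<Suc n. b m)) = (\<Sum>m<N. b m * (\<Sum>n\<in>{m..<N}. a n))"
proof (induction N)
  case 0 then show ?case by simp
next
  case (Suc N)
  have "(\<Sum>m<Suc N. b m * (\<Sum>n\<in>{m..<Suc N}. a n))
      = (\<Sum>m<Suc N. b m * (\<Sum>n\<in>{m..<N}. a n) + b m * a N)"
    by (rule sum.cong) (auto simp: distrib_left)
  also have "\<dots> = (\<Sum>m<N. b m * (\<Sum>n\<in>{m..<N}. a n)) + (\<Sum>m<Suc N. b m * a N)"
    by (simp add: sum.distrib)
  finally show ?case using Suc.IH by (simp add: sum_distrib_left distrib_left mult.commute add.assoc)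
qed

lemma ennreal_add_cancel0: "(a::ennreal) \<noteq> \<top> \<Longrightarrow> a + b \<le> a \<Longrightarrow> b = 0"
  using ennreal_add_left_cancel_le[of a b 0] by simp

lemma tail_le:
  fixes a :: "nat \<Rightarrow> ennreal"
  shows "(\<Sum>n\<in>{m..<N}. a n) \<le> (\<Sum>k. a (m + k))"
proof (cases "m \<le> N")
  case True
  have "(\<Sum>n\<in>{m..<N}. a n) = (\<Sum>n\<in>{0+m..<(N-m)+m}. a n)" using True by simp
  also have "\<dots> = (\<Sum>k\<in>{0..<N-m}. a (k + m))" by (rule sum.shift_bounds_nat_ivl)
  also have "\<dots> = (\<Sum>k\<in>{0..<N-m}. a (m + k))" by (simp add: add.commute)
  also have "\<dots> \<le> (\<Sum>k. a (m + k))" by (rule sum_le_suminf) auto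
  finally show ?thesis .
qed simp

locale filt = prob_space M for M :: "'a measure" +
  fixes F :: "nat \<Rightarrow> 'a measure"
  assumes df: "discrete_filtration M F"
begin

lemma sub: "subalgebra M (F n)"
  using df by (auto simp: discrete_filtration_def)

lemma space_F[simp]: "space (F n) = space M"
  using sub by (auto simp: subalgebra_def)

lemma sets_mono: "m \<le> n \<Longrightarrow> sets (F m) \<subseteq> sets (F n)"
proof (induction rule: dec_induct)
  case (step n) then show ?case using df unfolding discrete_filtration_def by blast
qed simp

lemma lift: "m \<le> n \<Longrightarrow> h \<in> measurable (F m) N \<Longrightarrow> h \<in> measurable (F n) N"
  using sets_mono[of m n] unfolding measurable_def by auto

lemma liftM: "h \<in> measurable (F m) N \<Longrightarrow> h \<in> measurable M N"
  by (rule measurable_from_subalg[OF sub])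

lemma sfs: "sigma_finite_subalgebra M (F n)"
  by (rule finite_measure_subalgebra_is_sigma_finite)
     (simp add: finite_measure_subalgebra_def finite_measure_subalgebra_axioms_def sub finite_measure_axioms)


lemma nce_le1:
  assumes S[measurable]: "S \<in> borel_measurable M"
    and bnd: "\<And>A. A \<in> sets (F n) \<Longrightarrow> (\<integral>\<^sup>+x. indicator A x * S x \<partial>M) \<le> emeasure M A"
  shows "AE x in M. nn_cond_exp M (F n) S x \<le> 1"
proof -
  interpret s: sigma_finite_subalgebra M "F n" by (rule sfs)
  define c where "c = nn_cond_exp M (F n) S"
  have cF[measurable]: "c \<in> borel_measurable (F n)" unfolding c_def by simp
  have cM[measurable]: "c \<in> borel_measurable M" unfolding c_def by simp
  define A where "A = {x\<in>space M. 1 < c x}"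
  have AF: "A \<in> sets (F n)"
  proof -
    have "{x\<in>space (F n). 1 < c x} \<in> sets (F n)" by measurable
    then show ?thesis unfolding A_def by simp
  qed
  have AM[measurable]: "A \<in> sets M" using AF sub by (auto simp: subalgebra_def)
  have indF: "indicator A \<in> borel_measurable (F n)" using AF by simp
  have "(\<integral>\<^sup>+x. indicator A x * c x \<partial>M) = (\<integral>\<^sup>+x. indicator A x * S x \<partial>M)"
    unfolding c_def by (rule s.nn_cond_exp_intg[OF indF S])
  also have "\<dots> \<le> emeasure M A" by (rule bnd[OF AF])
  finally have le: "(\<integral>\<^sup>+x. indicator A x * c x \<partial>M) \<le> emeasure M A" .
  have "(\<integral>\<^sup>+x. indicator A x * c x \<partial>M) = (\<integral>\<^sup>+x. indicator A x + indicator A x * (c x - 1) \<partial>M)"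
  proof (rule nn_integral_cong)
    fix x show "indicator A x * c x = indicator A x + indicator A x * (c x - 1)"
    proof (cases "x \<in> A")
      case True
      then have "1 \<le> c x" by (auto simp: A_def less_imp_le)
      then have "c x = 1 + (c x - 1)" by (rule ennreal_ineq_diff_add)
      then show ?thesis using True by simp
    qed simp
  qed
  also have "\<dots> = emeasure M A + (\<integral>\<^sup>+x. indicator A x * (c x - 1) \<partial>M)"
    by (subst nn_integral_add) auto
  finally have "emeasure M A + (\<integral>\<^sup>+x. indicator A x * (c x - 1) \<partial>M) \<le> emeasure M A"
    using le by simp
  moreover have "emeasure M A \<noteq> \<top>" by simp
  ultimately have "(\<integral>\<^sup>+x. indicator A x * (c x - 1) \<partial>M) = 0"
    using ennreal_add_left_cancel_le[of "emeasure M A" _ 0] by simp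
  then have "AE x in M. indicator A x * (c x - 1) = 0"
    by (subst (asm) nn_integral_0_iff_AE) auto
  then show ?thesis
  proof (rule AE_mp, intro AE_I2 impI)
    fix x assume x: "x \<in> space M" and h: "indicator A x * (c x - 1) = (0::ennreal)"
    show "nn_cond_exp M (F n) S x \<le> 1"
    proof (cases "x \<in> A")
      case True
      then have "c x - 1 = 0" using h by simp
      then show ?thesis unfolding c_def by (simp add: diff_eq_0_iff_ennreal)
    next
      case False then show ?thesis using x unfolding A_def c_def by auto
    qed
  qed
qed

lemma W:
  assumes E[measurable]: "E \<in> sets M" and w: "w \<in> borel_measurable (F j)"
  shows "(\<integral>\<^sup>+x. w x * ennreal (enn2real (nn_cond_exp M (F j) (indicator E) x)) \<partial>M)
       = (\<integral>\<^sup>+x. w x * indicator E x \<partial>M)"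
proof -
  interpret s: sigma_finite_subalgebra M "F j" by (rule sfs)
  have wM[measurable]: "w \<in> borel_measurable M" using liftM[OF w] .
  have "(\<integral>\<^sup>+x. nn_cond_exp M (F j) (indicator E) x \<partial>M) = (\<integral>\<^sup>+x. (\<lambda>_. 1) x * nn_cond_exp M (F j) (indicator E) x \<partial>M)"
    by simp
  also have "\<dots> = (\<integral>\<^sup>+x. 1 * indicator E x \<partial>M)"
    by (rule s.nn_cond_exp_intg) auto
  also have "\<dots> = emeasure M E" by simp
  finally have "(\<integral>\<^sup>+x. nn_cond_exp M (F j) (indicator E) x \<partial>M) \<noteq> \<infinity>" by simp
  then have fin: "AE x in M. nn_cond_exp M (F j) (indicator E) x \<noteq> \<infinity>"
    by (intro nn_integral_noteq_infinite) auto
  have "(\<integral>\<^sup>+x. w x * ennreal (enn2real (nn_cond_exp M (F j) (indicator E) x)) \<partial>M)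
      = (\<integral>\<^sup>+x. w x * nn_cond_exp M (F j) (indicator E) x \<partial>M)"
    by (rule nn_integral_cong_AE) (use fin in \<open>auto simp: ennreal_enn2real_if\<close>)
  also have "\<dots> = (\<integral>\<^sup>+x. w x * indicator E x \<partial>M)"
    by (rule s.nn_cond_exp_intg[OF w]) auto
  finally show ?thesis .
qed


lemma partA:
  fixes g \<alpha> :: "nat \<Rightarrow> 'a \<Rightarrow> real"
  assumes g: "\<And>n. g n \<in> borel_measurable (F n)" and g0: "\<And>n x. 0 \<le> g n x"
    and a: "\<And>n. \<alpha> n \<in> borel_measurable (F n)" and a0: "\<And>n x. x \<in> space M \<Longrightarrow> 0 \<le> \<alpha> n x"
    and car: "\<And>n. AE x in M. nn_cond_exp M (F n) (\<lambda>y. \<Sum>k. ennreal (\<alpha> (n + k) y)) x \<le> 1"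
  shows "(\<integral>\<^sup>+x. (\<Sum>n. ennreal (\<alpha> n x * g n x)) \<partial>M) \<le> (\<integral>\<^sup>+x. (SUP n. ennreal (g n x)) \<partial>M)"
proof -
  define G where "G n x = runmax (\<lambda>k. g k x) n" for n x
  define d where "d m x = (if m = 0 then G 0 x else G m x - G (m - 1) x)" for m x
  define S where "S m x = (\<Sum>k. ennreal (\<alpha> (m + k) x))" for m x
  have gM[measurable]: "g n \<in> borel_measurable M" for n using liftM[OF g] .
  have aM[measurable]: "\<alpha> n \<in> borel_measurable M" for n using liftM[OF a] .
  have GF: "G n \<in> borel_measurable (F n)" for n
    unfolding G_def by (rule runmax_measurable) (rule lift[OF _ g])
  have dF: "d m \<in> borel_measurable (F m)" for m
  proof (cases m)
    case 0 then show ?thesis using GF unfolding d_def by simp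
  next
    case (Suc k)
    have "G k \<in> borel_measurable (F m)" using lift[OF _ GF[of k]] Suc by simp
    then show ?thesis using GF[of m] Suc unfolding d_def by simp
  qed
  have dM[measurable]: "d m \<in> borel_measurable M" for m using liftM[OF dF] .
  have d0: "0 \<le> d m x" for m x
    unfolding d_def G_def by (auto simp: runmax_ge g0 intro!: runmax_mono)
  have tel: "(\<Sum>m<Suc n. d m x) = G n x" for n x
    by (induction n) (auto simp: d_def)
  have SM[measurable]: "S m \<in> borel_measurable M" for m unfolding S_def by measurable
  have pw: "(\<Sum>n<N. ennreal (\<alpha> n x * g n x)) \<le> (\<Sum>m<N. ennreal (d m x) * S m x)"
    if x: "x \<in> space M" for N x
  proof -
    have "(\<Sum>n<N. ennreal (\<alpha> n x * g n x)) \<le> (\<Sum>n<N. ennreal (\<alpha> n x) * (\<Sum>m<Suc n. ennreal (d m x)))"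
    proof (rule sum_mono)
      fix n
      have "ennreal (\<alpha> n x * g n x) = ennreal (\<alpha> n x) * ennreal (g n x)"
        using a0[OF x] g0 by (simp add: ennreal_mult)
      also have "\<dots> \<le> ennreal (\<alpha> n x) * ennreal (G n x)"
        by (rule mult_left_mono) (use runmax_ge[of n n "\<lambda>k. g k x"] in \<open>auto simp: G_def intro!: ennreal_leI\<close>)
      also have "ennreal (G n x) = (\<Sum>m<Suc n. ennreal (d m x))"
        using d0 by (simp only: sum_ennreal tel)
      finally show "ennreal (\<alpha> n x * g n x) \<le> ennreal (\<alpha> n x) * (\<Sum>m<Suc n. ennreal (d m x))" .
    qed
    also have "\<dots> = (\<Sum>m<N. ennreal (d m x) * (\<Sum>n\<in>{m..<N}. ennreal (\<alpha> n x)))"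
      by (rule swap_tri)
    also have "\<dots> \<le> (\<Sum>m<N. ennreal (d m x) * S m x)"
      unfolding S_def by (intro sum_mono mult_left_mono tail_le) auto
    finally show ?thesis .
  qed
  have step: "(\<integral>\<^sup>+x. ennreal (d m x) * S m x \<partial>M) \<le> (\<integral>\<^sup>+x. ennreal (d m x) \<partial>M)" for m
  proof -
    interpret s: sigma_finite_subalgebra M "F m" by (rule sfs)
    have dFe: "(\<lambda>x. ennreal (d m x)) \<in> borel_measurable (F m)" using dF by measurable
    have "(\<integral>\<^sup>+x. ennreal (d m x) * S m x \<partial>M) = (\<integral>\<^sup>+x. ennreal (d m x) * nn_cond_exp M (F m) (S m) x \<partial>M)"
      by (rule s.nn_cond_exp_intg[symmetric, OF dFe]) simp
    also have "\<dots> \<le> (\<integral>\<^sup>+x. ennreal (d m x) * 1 \<partial>M)"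
    proof (rule nn_integral_mono_AE)
      show "AE x in M. ennreal (d m x) * nn_cond_exp M (F m) (S m) x \<le> ennreal (d m x) * 1"
        using car[of m] unfolding S_def by eventually_elim (metis mult.right_neutral mult_left_mono zero_le)
    qed
    finally show ?thesis by simp
  qed
  have partial: "(\<integral>\<^sup>+x. (\<Sum>n<N. ennreal (\<alpha> n x * g n x)) \<partial>M) \<le> (\<integral>\<^sup>+x. (SUP n. ennreal (g n x)) \<partial>M)" for N
  proof -
    have "(\<integral>\<^sup>+x. (\<Sum>n<N. ennreal (\<alpha> n x * g n x)) \<partial>M) \<le> (\<integral>\<^sup>+x. (\<Sum>m<N. ennreal (d m x) * S m x) \<partial>M)"
      by (rule nn_integral_mono) (rule pw)
    also have "\<dots> = (\<Sum>m<N. \<integral>\<^sup>+x. ennreal (d m x) * S m x \<partial>M)"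
      by (rule nn_integral_sum) measurable
    also have "\<dots> \<le> (\<Sum>m<N. \<integral>\<^sup>+x. ennreal (d m x) \<partial>M)"
      by (rule sum_mono) (rule step)
    also have "\<dots> = (\<integral>\<^sup>+x. (\<Sum>m<N. ennreal (d m x)) \<partial>M)"
      by (rule nn_integral_sum[symmetric]) measurable
    also have "\<dots> \<le> (\<integral>\<^sup>+x. (SUP n. ennreal (g n x)) \<partial>M)"
    proof (rule nn_integral_mono)
      fix x
      have "(\<Sum>m<N. ennreal (d m x)) = ennreal (\<Sum>m<N. d m x)" using d0 by simp
      also have "\<dots> \<le> ennreal (\<Sum>m<Suc N. d m x)"
        by (intro ennreal_leI sum_mono2) (auto simp: d0)
      also have "\<dots> = ennreal (G N x)" by (simp only: tel)
      also obtain k where "G N x = g k x" unfolding G_def using runmax_ex by blast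
      also have "ennreal (g k x) \<le> (SUP n. ennreal (g n x))" by (rule SUP_upper) simp
      finally show "(\<Sum>m<N. ennreal (d m x)) \<le> (SUP n. ennreal (g n x))" .
    qed
    finally show ?thesis .
  qed
  have "(\<integral>\<^sup>+x. (\<Sum>n. ennreal (\<alpha> n x * g n x)) \<partial>M) = (\<Sum>n. \<integral>\<^sup>+x. ennreal (\<alpha> n x * g n x) \<partial>M)"
    by (rule nn_integral_suminf) measurable
  also have "\<dots> \<le> (\<integral>\<^sup>+x. (SUP n. ennreal (g n x)) \<partial>M)"
  proof (rule suminf_le_const)
    show "summable (\<lambda>n. \<integral>\<^sup>+x. ennreal (\<alpha> n x * g n x) \<partial>M)" by simp
    fix N
    have "(\<Sum>n<N. \<integral>\<^sup>+x. ennreal (\<alpha> n x * g n x) \<partial>M) = (\<integral>\<^sup>+x. (\<Sum>n<N. ennreal (\<alpha> n x * g n x)) \<partial>M)"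
      by (rule nn_integral_sum[symmetric]) measurable
    then show "(\<Sum>n<N. \<integral>\<^sup>+x. ennreal (\<alpha> n x * g n x) \<partial>M) \<le> (\<integral>\<^sup>+x. (SUP n. ennreal (g n x)) \<partial>M)"
      using partial[of N] by simp
  qed
  finally show ?thesis .
qed


lemma partB:
  fixes g :: "nat \<Rightarrow> 'a \<Rightarrow> real"
  assumes g: "\<And>n. g n \<in> borel_measurable (F n)" and g0: "\<And>n x. 0 \<le> g n x"
  shows "\<exists>\<alpha>. (\<forall>n. \<alpha> n \<in> borel_measurable (F n)) \<and> (\<forall>n. \<forall>x\<in>space M. 0 \<le> \<alpha> n x) \<and>
     (\<forall>n. AE x in M. nn_cond_exp M (F n) (\<lambda>y. \<Sum>k. ennreal (\<alpha> (n + k) y)) x \<le> ennreal 1) \<and>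
     (\<integral>\<^sup>+x. (\<Sum>n. ennreal (\<alpha> n x)) \<partial>M) = ennreal 1 \<and>
     (\<integral>\<^sup>+x. (\<Sum>n. ennreal (\<alpha> n x * g n x)) \<partial>M) = (\<integral>\<^sup>+x. ennreal (runmax (\<lambda>k. g k x) N) \<partial>M)"
proof -
  define G where "G x = runmax (\<lambda>k. g k x) N" for x
  define E where "E j = {x\<in>space M. j \<le> N \<and> g j x = G x \<and> (\<forall>k\<in>{..<j}. g k x < G x)}" for j
  have gM[measurable]: "g n \<in> borel_measurable M" for n using liftM[OF g] .
  have GM[measurable]: "G \<in> borel_measurable M"
    unfolding G_def by (rule runmax_measurable) simp
  have EM[measurable]: "E j \<in> sets M" for j unfolding E_def by measurable
  have disj: "disjoint_family E"
    unfolding disjoint_family_on_def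
  proof (intro ballI impI)
    fix i j :: nat assume "i \<noteq> j"
    then consider "i < j" | "j < i" by linarith
    then show "E i \<inter> E j = {}"
      by cases (auto simp: E_def; metis lessThan_iff less_irrefl)+
  qed
  have cover: "\<exists>j. x \<in> E j" if x: "x \<in> space M" for x
  proof -
    obtain k where k: "k \<le> N" "G x = g k x" unfolding G_def using runmax_ex by blast
    define j where "j = (LEAST j. g j x = G x)"
    have j1: "g j x = G x" unfolding j_def by (rule LeastI[of _ k]) (use k in simp)
    have j2: "j \<le> k" unfolding j_def by (rule Least_le) (use k in simp)
    have j3: "g i x < G x" if "i < j" for i
    proof -
      have "g i x \<noteq> G x" using not_less_Least[OF that[unfolded j_def]] by simp
      moreover have "g i x \<le> G x" unfolding G_def
        by (rule runmax_ge[of i N "\<lambda>k. g k x", simplified]) (use that j2 k in simp)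
      ultimately show ?thesis by simp
    qed
    show ?thesis using x j1 j2 j3 k by (auto simp: E_def intro!: exI[of _ j])
  qed
  have Eempty: "E j = {}" if "N < j" for j using that by (auto simp: E_def)
  define \<alpha> where "\<alpha> n x = (if n \<le> N then enn2real (nn_cond_exp M (F n) (indicator (E n)) x) else 0)" for n x
  have aF: "\<alpha> n \<in> borel_measurable (F n)" for n
  proof (cases "n \<le> N")
    case True then have "\<alpha> n = (\<lambda>x. enn2real (nn_cond_exp M (F n) (indicator (E n)) x))"
      by (auto simp: \<alpha>_def)
    then show ?thesis by simp
  next
    case False then have "\<alpha> n = (\<lambda>x. 0)" by (auto simp: \<alpha>_def)
    then show ?thesis by simp
  qed
  have aM[measurable]: "\<alpha> n \<in> borel_measurable M" for n using liftM[OF aF] .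
  have a0: "0 \<le> \<alpha> n x" for n x by (simp add: \<alpha>_def)
  have Wa: "(\<integral>\<^sup>+x. w x * ennreal (\<alpha> j x) \<partial>M) = (\<integral>\<^sup>+x. w x * indicator (E j) x \<partial>M)"
    if w: "w \<in> borel_measurable (F j)" for w j
  proof (cases "j \<le> N")
    case True then show ?thesis unfolding \<alpha>_def using W[OF EM w] by simp
  next
    case False then show ?thesis unfolding \<alpha>_def using Eempty[of j] by simp
  qed
  have ind_sum: "(\<integral>\<^sup>+x. indicator A x * (\<Sum>k. ennreal (\<alpha> (n + k) x)) \<partial>M)
      = (\<integral>\<^sup>+x. indicator A x * indicator (\<Union>k. E (n + k)) x \<partial>M)"
    if A: "A \<in> sets (F n)" for A n
  proof -
    have AM[measurable]: "A \<in> sets M" using A sub by (auto simp: subalgebra_def)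
    have "(\<integral>\<^sup>+x. indicator A x * (\<Sum>k. ennreal (\<alpha> (n + k) x)) \<partial>M)
        = (\<integral>\<^sup>+x. (\<Sum>k. indicator A x * ennreal (\<alpha> (n + k) x)) \<partial>M)" by simp
    also have "\<dots> = (\<Sum>k. \<integral>\<^sup>+x. indicator A x * ennreal (\<alpha> (n + k) x) \<partial>M)"
      by (rule nn_integral_suminf) measurable
    also have "\<dots> = (\<Sum>k. \<integral>\<^sup>+x. indicator A x * indicator (E (n + k)) x \<partial>M)"
    proof (rule suminf_cong)
      fix k
      have "(indicator A :: 'a \<Rightarrow> ennreal) \<in> borel_measurable (F n)" using A by simp
      then have "(indicator A :: 'a \<Rightarrow> ennreal) \<in> borel_measurable (F (n + k))" by (rule lift[rotated]) simp
      then show "(\<integral>\<^sup>+x. indicator A x * ennreal (\<alpha> (n + k) x) \<partial>M) = (\<integral>\<^sup>+x. indicator A x * indicator (E (n + k)) x \<partial>M)"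
        by (rule Wa)
    qed
    also have "\<dots> = (\<integral>\<^sup>+x. (\<Sum>k. indicator A x * indicator (E (n + k)) x) \<partial>M)"
      by (rule nn_integral_suminf[symmetric]) measurable
    also have "\<dots> = (\<integral>\<^sup>+x. indicator A x * indicator (\<Union>k. E (n + k)) x \<partial>M)"
    proof -
      have "disjoint_family (\<lambda>k. E (n + k))"
        using disj unfolding disjoint_family_on_def by auto
      then show ?thesis by (simp add: suminf_indicator)
    qed
    finally show ?thesis .
  qed
  have car: "AE x in M. nn_cond_exp M (F n) (\<lambda>y. \<Sum>k. ennreal (\<alpha> (n + k) y)) x \<le> ennreal 1" for n
  proof -
    have "AE x in M. nn_cond_exp M (F n) (\<lambda>y. \<Sum>k. ennreal (\<alpha> (n + k) y)) x \<le> 1"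
    proof (rule nce_le1)
      show "(\<lambda>y. \<Sum>k. ennreal (\<alpha> (n + k) y)) \<in> borel_measurable M" by measurable
      fix A assume A: "A \<in> sets (F n)"
      have AM[measurable]: "A \<in> sets M" using A sub by (auto simp: subalgebra_def)
      have "(\<integral>\<^sup>+x. indicator A x * (\<Sum>k. ennreal (\<alpha> (n + k) x)) \<partial>M)
          = (\<integral>\<^sup>+x. indicator A x * indicator (\<Union>k. E (n + k)) x \<partial>M)" by (rule ind_sum[OF A])
      also have "\<dots> \<le> (\<integral>\<^sup>+x. indicator A x \<partial>M)"
        by (rule nn_integral_mono) (auto simp: indicator_def)
      also have "\<dots> = emeasure M A" by simp
      finally show "(\<integral>\<^sup>+x. indicator A x * (\<Sum>k. ennreal (\<alpha> (n + k) x)) \<partial>M) \<le> emeasure M A" .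
    qed
    then show ?thesis by simp
  qed
  have tot: "(\<integral>\<^sup>+x. (\<Sum>n. ennreal (\<alpha> n x)) \<partial>M) = ennreal 1"
  proof -
    have "(\<integral>\<^sup>+x. (\<Sum>n. ennreal (\<alpha> n x)) \<partial>M) = (\<integral>\<^sup>+x. indicator (space M) x * (\<Sum>k. ennreal (\<alpha> (0 + k) x)) \<partial>M)"
      by (rule nn_integral_cong) simp
    also have "\<dots> = (\<integral>\<^sup>+x. indicator (space M) x * indicator (\<Union>k. E (0 + k)) x \<partial>M)"
      by (rule ind_sum) (metis sets.top space_F)
    also have "\<dots> = (\<integral>\<^sup>+x. indicator (space M) x \<partial>M)"
      by (rule nn_integral_cong) (use cover in \<open>auto simp: indicator_def\<close>)
    also have "\<dots> = 1" using emeasure_space_1 by simp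
    finally show ?thesis by simp
  qed
  have obj: "(\<integral>\<^sup>+x. (\<Sum>n. ennreal (\<alpha> n x * g n x)) \<partial>M) = (\<integral>\<^sup>+x. ennreal (G x) \<partial>M)"
  proof -
    have "(\<integral>\<^sup>+x. (\<Sum>n. ennreal (\<alpha> n x * g n x)) \<partial>M) = (\<integral>\<^sup>+x. (\<Sum>n. ennreal (g n x) * ennreal (\<alpha> n x)) \<partial>M)"
      using a0 g0 by (simp add: ennreal_mult mult.commute)
    also have "\<dots> = (\<Sum>n. \<integral>\<^sup>+x. ennreal (g n x) * ennreal (\<alpha> n x) \<partial>M)"
      by (rule nn_integral_suminf) measurable
    also have "\<dots> = (\<Sum>n. \<integral>\<^sup>+x. ennreal (g n x) * indicator (E n) x \<partial>M)"
    proof (rule suminf_cong)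
      fix n
      have "(\<lambda>x. ennreal (g n x)) \<in> borel_measurable (F n)" using g[of n] by measurable
      then show "(\<integral>\<^sup>+x. ennreal (g n x) * ennreal (\<alpha> n x) \<partial>M) = (\<integral>\<^sup>+x. ennreal (g n x) * indicator (E n) x \<partial>M)"
        by (rule Wa)
    qed
    also have "\<dots> = (\<integral>\<^sup>+x. (\<Sum>n. ennreal (g n x) * indicator (E n) x) \<partial>M)"
      by (rule nn_integral_suminf[symmetric]) measurable
    also have "\<dots> = (\<integral>\<^sup>+x. ennreal (G x) \<partial>M)"
    proof (rule nn_integral_cong)
      fix x assume x: "x \<in> space M"
      obtain j where j: "x \<in> E j" using cover[OF x] by blast
      have "(\<lambda>n. ennreal (g n x) * indicator (E n) x) = (\<lambda>n. if n = j then ennreal (g n x) else 0)"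
      proof
        fix n show "ennreal (g n x) * indicator (E n) x = (if n = j then ennreal (g n x) else 0)"
          using j disj unfolding disjoint_family_on_def by (auto simp: indicator_def)
      qed
      then have "(\<Sum>n. ennreal (g n x) * indicator (E n) x) = ennreal (g j x)"
        using sums_unique[OF sums_single[of j "\<lambda>n. ennreal (g n x)"]] by simp
      also have "g j x = G x" using j by (simp add: E_def)
      finally show "(\<Sum>n. ennreal (g n x) * indicator (E n) x) = ennreal (G x)" .
    qed
    finally show ?thesis .
  qed
  show ?thesis
    by (rule exI[of _ \<alpha>]) (use aF a0 car tot obj in \<open>simp add: G_def\<close>)
qed

end


theorem theoremB:
  fixes M :: "'a measure" and F :: "nat \<Rightarrow> 'a measure" and p FF ff :: real
  assumes "p > 1"
    and "prob_space M"
    and "discrete_filtration M F"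
    and "ff \<ge> 0"
    and "FF \<ge> ff powr p"
  shows "max_bellman M F p FF ff \<le> carleson_bellman M F p FF ff 1 1
         \<and> (infinitely_refining M F \<longrightarrow>
              max_bellman M F p FF ff = carleson_bellman M F p FF ff 1 1)"
proof -
  interpret filt M F by (intro filt.intro filt_axioms.intro assms)
  define g where "g f n x = \<bar>real_cond_exp M (F n) f x\<bar> powr p" for f n x
  have gF: "g f n \<in> borel_measurable (F n)" for f n unfolding g_def by measurable
  have gM[measurable]: "g f n \<in> borel_measurable M" for f n using liftM[OF gF] .
  have g0: "0 \<le> g f n x" for f n x by (simp add: g_def)
  have le1: "max_bellman M F p FF ff \<le> carleson_bellman M F p FF ff 1 1"
    unfolding max_bellman_def
  proof (rule Sup_least)
    fix y assume "y \<in> {(\<integral>\<^sup>+ x. (SUP n. ennreal (\<bar>real_cond_exp M (F n) f x\<bar> powr p)) \<partial>M) | f.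
            f \<in> borel_measurable M \<and> (\<forall>x\<in>space M. 0 \<le> f x) \<and>
            (\<integral>\<^sup>+ x. ennreal (f x powr p) \<partial>M) = ennreal FF \<and>
            (\<integral>\<^sup>+ x. ennreal (f x) \<partial>M) = ennreal ff}"
    then obtain f where y: "y = (\<integral>\<^sup>+ x. (SUP n. ennreal (g f n x)) \<partial>M)"
      and f: "f \<in> borel_measurable M" "\<forall>x\<in>space M. 0 \<le> f x"
             "(\<integral>\<^sup>+ x. ennreal (f x powr p) \<partial>M) = ennreal FF"
             "(\<integral>\<^sup>+ x. ennreal (f x) \<partial>M) = ennreal ff"
      unfolding g_def by blast
    have "y = (\<integral>\<^sup>+ x. (SUP N. ennreal (runmax (\<lambda>k. g f k x) N)) \<partial>M)"
      unfolding y SUP_runmax ..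
    also have "\<dots> = (SUP N. \<integral>\<^sup>+ x. ennreal (runmax (\<lambda>k. g f k x) N) \<partial>M)"
    proof (rule nn_integral_monotone_convergence_SUP)
      show "incseq (\<lambda>N x. ennreal (runmax (\<lambda>k. g f k x) N))"
        by (auto simp: incseq_def le_fun_def intro!: ennreal_leI runmax_mono)
      fix N
      have "(\<lambda>x. runmax (\<lambda>k. g f k x) N) \<in> borel_measurable M"
        by (rule runmax_measurable) simp
      then show "(\<lambda>x. ennreal (runmax (\<lambda>k. g f k x) N)) \<in> borel_measurable M" by measurable
    qed
    also have "\<dots> \<le> carleson_bellman M F p FF ff 1 1"
    proof (rule SUP_least)
      fix N
      obtain \<alpha> where a: "\<forall>n. \<alpha> n \<in> borel_measurable (F n)" "\<forall>n. \<forall>x\<in>space M. 0 \<le> \<alpha> n x"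
        "\<forall>n. AE x in M. nn_cond_exp M (F n) (\<lambda>y. \<Sum>k. ennreal (\<alpha> (n + k) y)) x \<le> ennreal 1"
        "(\<integral>\<^sup>+x. (\<Sum>n. ennreal (\<alpha> n x)) \<partial>M) = ennreal 1"
        "(\<integral>\<^sup>+x. (\<Sum>n. ennreal (\<alpha> n x * g f n x)) \<partial>M) = (\<integral>\<^sup>+x. ennreal (runmax (\<lambda>k. g f k x) N) \<partial>M)"
        using partB[of "g f" N, OF gF g0] by blast
      have "(\<integral>\<^sup>+x. (\<Sum>n. ennreal (\<alpha> n x * g f n x)) \<partial>M) \<le> carleson_bellman M F p FF ff 1 1"
        unfolding carleson_bellman_def
        using f a(1-4) unfolding g_def by (intro Sup_upper CollectI exI[of _ f] exI[of _ \<alpha>]) auto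
      then show "(\<integral>\<^sup>+x. ennreal (runmax (\<lambda>k. g f k x) N) \<partial>M) \<le> carleson_bellman M F p FF ff 1 1"
        using a(5) by simp
    qed
    finally show "y \<le> carleson_bellman M F p FF ff 1 1" .
  qed
  have le2: "carleson_bellman M F p FF ff 1 1 \<le> max_bellman M F p FF ff"
    unfolding carleson_bellman_def
  proof (rule Sup_least)
    fix y assume "y \<in> {(\<integral>\<^sup>+ x. (\<Sum>n. ennreal (\<alpha> n x * \<bar>real_cond_exp M (F n) f x\<bar> powr p)) \<partial>M) | f \<alpha>.
            f \<in> borel_measurable M \<and> (\<forall>x\<in>space M. 0 \<le> f x) \<and>
            (\<forall>n. \<alpha> n \<in> borel_measurable (F n)) \<and> (\<forall>n. \<forall>x\<in>space M. 0 \<le> \<alpha> n x) \<and>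
            (\<forall>n. AE x in M. nn_cond_exp M (F n) (\<lambda>y. \<Sum>k. ennreal (\<alpha> (n + k) y)) x \<le> ennreal 1) \<and>
            (\<integral>\<^sup>+ x. ennreal (f x powr p) \<partial>M) = ennreal FF \<and>
            (\<integral>\<^sup>+ x. ennreal (f x) \<partial>M) = ennreal ff \<and>
            (\<integral>\<^sup>+ x. (\<Sum>n. ennreal (\<alpha> n x)) \<partial>M) = ennreal 1}"
    then obtain f \<alpha> where y: "y = (\<integral>\<^sup>+ x. (\<Sum>n. ennreal (\<alpha> n x * g f n x)) \<partial>M)"
      and f: "f \<in> borel_measurable M" "\<forall>x\<in>space M. 0 \<le> f x"
             "(\<integral>\<^sup>+ x. ennreal (f x powr p) \<partial>M) = ennreal FF"
             "(\<integral>\<^sup>+ x. ennreal (f x) \<partial>M) = ennreal ff"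
      and a: "\<forall>n. \<alpha> n \<in> borel_measurable (F n)" "\<forall>n. \<forall>x\<in>space M. 0 \<le> \<alpha> n x"
        "\<forall>n. AE x in M. nn_cond_exp M (F n) (\<lambda>y. \<Sum>k. ennreal (\<alpha> (n + k) y)) x \<le> ennreal 1"
      unfolding g_def by blast
    have "y \<le> (\<integral>\<^sup>+ x. (SUP n. ennreal (g f n x)) \<partial>M)"
      unfolding y by (rule partA[OF gF g0]) (use a in auto)
    also have "\<dots> \<le> max_bellman M F p FF ff"
      unfolding max_bellman_def
      by (rule Sup_upper) (use f in \<open>auto simp: g_def\<close>)
    finally show "y \<le> max_bellman M F p FF ff"
      unfolding max_bellman_def .
  qed
  show ?thesis using le1 le2 by auto
qed

end
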